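(* Consider four neighboring particles located at $x_1<x_2=x_3<x_4$ with function values $u_1,u_2,u_3,u_4$, where the middle two particles (at $x_2=x_3$) are to be merged into a single particle $(x_{23},u_{23})$. Assume $f''>0$ on the range of the values, so that the colliding particles satisfy $u_2>u_3$ (for $f''<0$ all following inequality signs are reversed). If the resulting merged value $u_{23}$ satisfies $u_1\ge u_{23}\ge u_4$, then the Kružkov entropy does not increase due to the merge, i.e. for every $k\in\mathbb{R}$, \[ \int_{x_1}^{x_4}|\tilde u(x)-k|\,dx \le \int_{x_1}^{x_4}|u(x)-k|\,dx, \] where $u$ and $\tilde u$ denote the interpolating function on $[x_1,x_4]$ before and after the merge, respectively.
   Context: Setting: a particle method for the one-dimensional scalar conservation law $u_t+(f(u))_x=0$, $u(x,0)=u_0(x)$, with $f'$ continuous and $f$ strictly convex or concave on the range of particle values. Particles $(x_i,u_i)$, ordered $x_1<\dots<x_m$, move with their characteristic speeds $f'(u_i)$. Between two neighboring particles $(x_1,u_1),(x_2,u_2)$ with $u_1\ne u_2$ the solution is interpolated by $x(u)=x_1+\frac{f'(u)-f'(u_1)}{f'(u_2)-f'(u_1)}(x_2-x_1)$ (constant if $u_1=u_2$); the area under this interpolation between the two particles equals $(x_2-x_1)\,a(u_1,u_2)$ with the nonlinear average $a(u_1,u_2)=\frac{\int_{u_1}^{u_2}f''(u)\,u\,du}{\int_{u_1}^{u_2}f''(u)\,du}$. When particles 2 and 3 collide, they are replaced by a particle at $x_{23}=\frac{x_2+x_3}{2}$ with value $u_{23}$ chosen so that the total area between $x_1$ and $x_4$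 is unchanged: $(x_{23}-x_1)a(u_1,u_{23})+(x_4-x_{23})a(u_{23},u_4)=(x_2-x_1)a(u_1,u_2)+(x_3-x_2)a(u_2,u_3)+(x_4-x_3)a(u_3,u_4)$. The Kružkov entropy pair is $\eta_k(u)=|u-k|$, $q_k(u)=\mathrm{sign}(u-k)(f(u)-f(k))$, and the total entropy is $\int\eta_k(u(x))\,dx$. *)

theory Defs
  imports "HOL-Analysis.Analysis"
begin

text \<open>The orientation signs of numerator and denominator cancel, so we integrate over the
  unoriented interval; for u1 = u2 the average is u1 (constant interpolation).\<close>
definition nl_avg :: "(real \<Rightarrow> real) \<Rightarrow> real \<Rightarrow> real \<Rightarrow> real" where
  "nl_avg f'' u1 u2 =
     (if u1 = u2 then u1
      else integral {min u1 u2..max u1 u2} (\<lambda>u. f'' u * u)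
           / integral {min u1 u2..max u1 u2} (\<lambda>u. f'' u))"

definition interp :: "(real \<Rightarrow> real) \<Rightarrow> real \<Rightarrow> real \<Rightarrow> real \<Rightarrow> real \<Rightarrow> real \<Rightarrow> real" where
  "interp f' x1 u1 x2 u2 x =
     (if u1 = u2 then u1
      else (THE u. u \<in> closed_segment u1 u2 \<and>
                   x1 + (f' u - f' u1) / (f' u2 - f' u1) * (x2 - x1) = x))"

definition interp3 :: "(real \<Rightarrow> real) \<Rightarrow> real \<Rightarrow> real \<Rightarrow> real \<Rightarrow> real \<Rightarrow> real \<Rightarrow> real \<Rightarrow> real \<Rightarrow> real" where
  "interp3 f' x1 u1 xm um x4 u4 x =
     (if x \<le> xm then interp f' x1 u1 xm um x else interp f' xm um x4 u4 x)"

definition interp4 :: "(real \<Rightarrow> real) \<Rightarrow> real \<Rightarrow> real \<Rightarrow> real \<Rightarrow> real \<Rightarrow> real \<Rightarrow> real \<Rightarrow> real \<Rightarrow> real \<Rightarrow> real \<Rightarrow> real" where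
  "interp4 f' x1 u1 x2 u2 x3 u3 x4 u4 x =
     (if x \<le> x2 then interp f' x1 u1 x2 u2 x
      else if x \<le> x3 then interp f' x2 u2 x3 u3 x
      else interp f' x3 u3 x4 u4 x)"

end

theory Submission
  imports Defs
begin

lemma cseg_real: "closed_segment (a::real) b = {min a b..max a b}"
  by (auto simp: closed_segment_eq_real_ivl min_def max_def)

lemma fmono:
  fixes f' f'' :: "real \<Rightarrow> real"
  assumes f'd: "\<And>u. (f' has_real_derivative f'' u) (at u)"
    and pos: "\<And>u. u \<in> S \<Longrightarrow> f'' u > 0"
    and conv: "\<And>w. u \<le> w \<Longrightarrow> w \<le> v \<Longrightarrow> w \<in> S"
    and uv: "u < v"
  shows "f' u < f' v"
  using uv by (rule DERIV_pos_imp_increasing) (use f'd pos conv in blast)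

lemma finj:
  fixes f' f'' :: "real \<Rightarrow> real"
  assumes f'd: "\<And>u. (f' has_real_derivative f'' u) (at u)"
    and pos: "\<And>u. u \<in> closed_segment a b \<Longrightarrow> f'' u > 0"
  shows "inj_on f' (closed_segment a b)"
proof (rule inj_onI, rule ccontr)
  fix u v assume u: "u \<in> closed_segment a b" and v: "v \<in> closed_segment a b" and e: "f' u = f' v" "u \<noteq> v"
  have conv: "w \<in> closed_segment a b" if "min u v \<le> w" "w \<le> max u v" for w
    using u v that by (auto simp: cseg_real)
  show False
  proof (cases "u < v")
    case True
    have "f' u < f' v" by (rule fmono[OF f'd pos _ True]) (use conv in auto)
    then show False using e by simp
  next
    case False
    then have "v < u" using e by simp
    have "f' v < f' u" by (rule fmono[OF f'd pos _ \<open>v<u\<close>]) (use conv in auto)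
    then show False using e by simp
  qed
qed

lemma seg_char:
  fixes f' f'' :: "real \<Rightarrow> real"
  assumes f'd: "\<And>u. (f' has_real_derivative f'' u) (at u)"
    and pos: "\<And>u. u \<in> closed_segment a b \<Longrightarrow> f'' u > 0"
    and x12: "x1 < x2" and x: "x \<in> {x1..x2}"
  shows "interp f' x1 a x2 b x \<in> closed_segment a b \<and>
         f' (interp f' x1 a x2 b x) = f' a + (x - x1) / (x2 - x1) * (f' b - f' a)"
proof (cases "a = b")
  case True then show ?thesis by (simp add: interp_def)
next
  case False
  have inj: "inj_on f' (closed_segment a b)" by (rule finj[OF f'd pos])
  have ne: "f' a \<noteq> f' b" using inj False by (auto dest: inj_onD)
  define t where "t = (x - x1) / (x2 - x1)"
  have t01: "0 \<le> t" "t \<le> 1" using x x12 by (auto simp: t_def divide_simps)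
  define T where "T = f' a + t * (f' b - f' a)"
  have "T \<in> closed_segment (f' a) (f' b)"
    unfolding T_def closed_segment_def using t01
    by (auto intro!: exI[of _ t] simp: algebra_simps)
  moreover have "continuous_on (closed_segment a b) f'"
    using f'd by (meson DERIV_isCont continuous_at_imp_continuous_on)
  ultimately obtain u where u: "u \<in> closed_segment a b" "f' u = T"
    using IVT'_closed_segment_real by blast
  have P: "u \<in> closed_segment a b \<and> x1 + (f' u - f' a) / (f' b - f' a) * (x2 - x1) = x"
    using u ne x12 by (simp add: T_def t_def field_simps)
  have "(THE u. u \<in> closed_segment a b \<and> x1 + (f' u - f' a) / (f' b - f' a) * (x2 - x1) = x) = u"
  proof (rule the_equality)
    show "u \<in> closed_segment a b \<and> x1 + (f' u - f' a) / (f' b - f' a) * (x2 - x1) = x" by (rule P)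
  next
    fix v assume v: "v \<in> closed_segment a b \<and> x1 + (f' v - f' a) / (f' b - f' a) * (x2 - x1) = x"
    then have "f' v = T" using ne x12 by (simp add: T_def t_def field_simps)
    then show "v = u" using u v inj by (metis inj_onD)
  qed
  then show ?thesis using u False by (simp add: interp_def T_def t_def)
qed

lemma ftc_avg:
  fixes f f' f'' :: "real \<Rightarrow> real"
  assumes fd: "\<And>u. (f has_real_derivative f' u) (at u)"
    and f'd: "\<And>u. (f' has_real_derivative f'' u) (at u)"
    and lh: "lo \<le> hi"
  shows "integral {lo..hi} (\<lambda>u. f'' u * u) = (hi * f' hi - f hi) - (lo * f' lo - f lo)"
    and "integral {lo..hi} f'' = f' hi - f' lo"
proof -
  have "((\<lambda>u. f'' u * u) has_integral ((\<lambda>u. u * f' u - f u) hi - (\<lambda>u. u * f' u - f u) lo)) {lo..hi}"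
  proof (rule fundamental_theorem_of_calculus[OF lh])
    fix x assume "x \<in> {lo..hi}"
    have "((\<lambda>u. u * f' u - f u) has_real_derivative (1 * f' x + x * f'' x - f' x)) (at x)"
      by (auto intro!: derivative_eq_intros f'd fd)
    then have "((\<lambda>u. u * f' u - f u) has_real_derivative (1 * f' x + x * f'' x - f' x)) (at x within {lo..hi})"
      by (rule DERIV_subset) auto
    then show "((\<lambda>u. u * f' u - f u) has_vector_derivative f'' x * x) (at x within {lo..hi})"
      by (simp add: has_real_derivative_iff_has_vector_derivative[symmetric] algebra_simps)
  qed
  then show "integral {lo..hi} (\<lambda>u. f'' u * u) = (hi * f' hi - f hi) - (lo * f' lo - f lo)"
    by (simp add: integral_unique)
  have "(f'' has_integral (f' hi - f' lo)) {lo..hi}"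
    by (rule fundamental_theorem_of_calculus[OF lh])
       (use f'd in \<open>auto simp: has_real_derivative_iff_has_vector_derivative[symmetric] intro: DERIV_subset\<close>)
  then show "integral {lo..hi} f'' = f' hi - f' lo" by (simp add: integral_unique)
qed

lemma nl_avg_eq:
  fixes f f' f'' :: "real \<Rightarrow> real"
  assumes fd: "\<And>u. (f has_real_derivative f' u) (at u)"
    and f'd: "\<And>u. (f' has_real_derivative f'' u) (at u)"
    and ne: "f' a \<noteq> f' b"
  shows "nl_avg f'' a b = ((b * f' b - f b) - (a * f' a - f a)) / (f' b - f' a)"
proof -
  have ab: "a \<noteq> b" using ne by auto
  show ?thesis
  proof (cases "a < b")
    case True
    then show ?thesis using ftc_avg[OF fd f'd, of a b] ab
      by (simp add: nl_avg_def min_def max_def)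
  next
    case False
    then have "b \<le> a" by simp
    then have "nl_avg f'' a b = ((a * f' a - f a) - (b * f' b - f b)) / (f' a - f' b)"
      using ftc_avg[OF fd f'd, of b a] ab by (simp add: nl_avg_def min_def max_def)
    also have "\<dots> = ((b * f' b - f b) - (a * f' a - f a)) / (f' b - f' a)"
      using ne by (simp add: field_simps)
    finally show ?thesis .
  qed
qed

lemma seg_int:
  fixes f f' f'' :: "real \<Rightarrow> real"
  assumes fd: "\<And>u. (f has_real_derivative f' u) (at u)"
    and f'd: "\<And>u. (f' has_real_derivative f'' u) (at u)"
    and pos: "\<And>u. u \<in> closed_segment a b \<Longrightarrow> f'' u > 0"
    and x12: "x1 < x2"
  shows "continuous_on {x1..x2} (interp f' x1 a x2 b)"
    and "(interp f' x1 a x2 b has_integral ((x2 - x1) * nl_avg f'' a b)) {x1..x2}"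
proof -
  define U where "U = interp f' x1 a x2 b"
  define S where "S = closed_segment a b"
  define L where "L = (\<lambda>x. f' a + (x - x1) / (x2 - x1) * (f' b - f' a))"
  have ch: "U x \<in> S" "f' (U x) = L x" if "x \<in> {x1..x2}" for x
    using seg_char[OF f'd pos x12 that] by (auto simp: U_def S_def L_def)
  have "continuous_on {x1..x2} U \<and> (U has_integral ((x2 - x1) * nl_avg f'' a b)) {x1..x2}"
  proof (cases "a = b")
    case True
    then have "U = (\<lambda>x. a)" by (auto simp: U_def interp_def fun_eq_iff)
    then show ?thesis using True x12 has_integral_const_real[of a x1 x2] by (simp add: nl_avg_def mult.commute)
  next
    case False
    have inj: "inj_on f' S" unfolding S_def by (rule finj[OF f'd pos])
    have ne: "f' a \<noteq> f' b" using inj False by (auto simp: S_def dest: inj_onD)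
    define ginv where "ginv = the_inv_into S f'"
    have cf': "continuous_on S f'"
      using f'd by (meson DERIV_isCont continuous_at_imp_continuous_on)
    have cg: "continuous_on (f' ` S) ginv"
      by (rule continuous_on_inv[OF cf']) (use inj in \<open>auto simp: ginv_def the_inv_into_f_f S_def\<close>)
    have Ug: "U x = ginv (L x)" if "x \<in> {x1..x2}" for x
      using ch[OF that] inj by (metis ginv_def the_inv_into_f_f)
    have LS: "L ` {x1..x2} \<subseteq> f' ` S" using ch by (metis image_eqI image_subsetI)
    have cL: "continuous_on {x1..x2} L" unfolding L_def using x12 by (intro continuous_intros) auto
    have cU: "continuous_on {x1..x2} U"
      by (rule continuous_on_eq[OF continuous_on_compose2[OF cg cL LS]]) (use Ug in auto)
    have Ua: "U x1 = a"
    proof -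
      have "f' (U x1) = f' a" "U x1 \<in> S" using ch[of x1] x12 by (auto simp: L_def)
      moreover have "a \<in> S" by (simp add: S_def)
      ultimately show ?thesis using inj by (meson inj_onD)
    qed
    have Ub: "U x2 = b"
    proof -
      have "f' (U x2) = f' b" "U x2 \<in> S" using ch[of x2] x12 by (auto simp: L_def)
      moreover have "b \<in> S" by (simp add: S_def)
      ultimately show ?thesis using inj by (meson inj_onD)
    qed
    define c where "c = (x2 - x1) / (f' b - f' a)"
    define F where "F = (\<lambda>x. c * (U x * L x - f (U x)))"
    have cfun: "continuous_on UNIV f"
      using fd by (meson DERIV_isCont continuous_at_imp_continuous_on)
    have cF: "continuous_on {x1..x2} F"
      unfolding F_def
      by (intro continuous_intros cU cL continuous_on_compose2[OF cfun cU]) auto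
    have dU: "\<exists>D. (U has_real_derivative D) (at x)" if x: "x \<in> {x1<..<x2}" for x
    proof -
      define X where "X = (\<lambda>u. x1 + (f' u - f' a) / (f' b - f' a) * (x2 - x1))"
      have xi: "x \<in> {x1..x2}" using x by auto
      have "(X has_real_derivative (f'' (U x) / (f' b - f' a) * (x2 - x1))) (at (U x))"
        unfolding X_def using ne by (auto intro!: derivative_eq_intros f'd)
      moreover have "f'' (U x) / (f' b - f' a) * (x2 - x1) \<noteq> 0"
        using pos[of "U x"] ch[OF xi] ne x12 by (simp add: S_def)
      moreover have "X (U y) = y" if "x1 < y" "y < x2" for y
        using ch[of y] that ne x12 by (simp add: X_def L_def field_simps)
      moreover have "isCont U x"
        using continuous_on_interior[OF cU] x by simp
      ultimately have "(U has_real_derivative inverse (f'' (U x) / (f' b - f' a) * (x2 - x1))) (at x)"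
        using x by (intro DERIV_inverse_function[where a = x1 and b = x2]) auto
      then show ?thesis by blast
    qed
    have dF: "(F has_vector_derivative U x) (at x)" if x: "x \<in> {x1<..<x2}" for x
    proof -
      obtain D where D: "(U has_real_derivative D) (at x)" using dU[OF x] by blast
      have xi: "x \<in> {x1..x2}" using x by auto
      have "(F has_real_derivative c * ((D * L x + U x * ((f' b - f' a) / (x2 - x1))) - f' (U x) * D)) (at x)"
        unfolding F_def L_def
        using x12 by (auto intro!: derivative_eq_intros D DERIV_chain2[OF fd D] simp: L_def)
      moreover have "c * ((D * L x + U x * ((f' b - f' a) / (x2 - x1))) - f' (U x) * D) = U x"
      proof -
        have c1: "c * ((f' b - f' a) / (x2 - x1)) = 1" using ne x12 by (simp add: c_def)
        have "c * ((D * L x + U x * ((f' b - f' a) / (x2 - x1))) - f' (U x) * D)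
              = U x * (c * ((f' b - f' a) / (x2 - x1)))"
          using ch[OF xi] by (simp add: algebra_simps)
        then show ?thesis by (metis c1 mult.right_neutral)
      qed
      ultimately show ?thesis
        by (simp add: has_real_derivative_iff_has_vector_derivative[symmetric])
    qed
    have "(U has_integral (F x2 - F x1)) {x1..x2}"
      by (rule fundamental_theorem_of_calculus_interior_strong[of "{}"]) (use x12 dF cF in auto)
    moreover have "F x2 - F x1 = (x2 - x1) * nl_avg f'' a b"
    proof -
      have L1: "L x1 = f' a" and L2: "L x2 = f' b" using x12 by (auto simp: L_def)
      have "F x2 - F x1 = c * ((b * f' b - f b) - (a * f' a - f a))"
        by (simp add: F_def Ua Ub L1 L2 algebra_simps)
      also have "\<dots> = (x2 - x1) * nl_avg f'' a b"
        by (simp add: nl_avg_eq[OF fd f'd ne] c_def)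
      finally show ?thesis .
    qed
    ultimately show ?thesis using cU by simp
  qed
  then show "continuous_on {x1..x2} (interp f' x1 a x2 b)"
    and "(interp f' x1 a x2 b has_integral ((x2 - x1) * nl_avg f'' a b)) {x1..x2}"
    by (auto simp: U_def)
qed

lemma fle:
  fixes f' f'' :: "real \<Rightarrow> real"
  assumes f'd: "\<And>u. (f' has_real_derivative f'' u) (at u)"
    and pos: "\<And>u. u \<in> {lo..hi} \<Longrightarrow> f'' u > 0"
    and p: "p \<in> {lo..hi}" and q: "q \<in> {lo..hi}"
  shows "f' p \<le> f' q \<longleftrightarrow> p \<le> q"
proof
  assume "f' p \<le> f' q"
  show "p \<le> q"
  proof (rule ccontr)
    assume "\<not> p \<le> q"
    then have "q < p" by simp
    have "f' q < f' p" by (rule fmono[where S="{lo..hi}", OF f'd pos]) (use p q \<open>q < p\<close> in auto)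
    then show False using \<open>f' p \<le> f' q\<close> by simp
  qed
next
  assume "p \<le> q"
  show "f' p \<le> f' q"
  proof (cases "p = q")
    case False
    then have "p < q" using \<open>p \<le> q\<close> by simp
    have "f' p < f' q" by (rule fmono[where S="{lo..hi}", OF f'd pos]) (use p q \<open>p < q\<close> in auto)
    then show ?thesis by simp
  qed simp
qed

lemma piece_int:
  fixes P Q :: "real \<Rightarrow> real"
  assumes "x1 \<le> x2" "x2 \<le> x4"
    and P: "(P has_integral i) {x1..x2}" and Q: "(Q has_integral j) {x2..x4}"
  shows "((\<lambda>x. if x \<le> x2 then P x else Q x) has_integral (i + j)) {x1..x4}"
proof (rule has_integral_combine[OF assms(1,2)])
  show "((\<lambda>x. if x \<le> x2 then P x else Q x) has_integral i) {x1..x2}"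
    by (rule has_integral_spike_finite[OF _ _ P, of "{}"]) auto
  show "((\<lambda>x. if x \<le> x2 then P x else Q x) has_integral j) {x2..x4}"
    by (rule has_integral_spike_finite[OF _ _ Q, of "{x2}"]) auto
qed

theorem lemma5:
  fixes f f' f'' :: "real \<Rightarrow> real"
    and x1 x2 x3 x4 u1 u2 u3 u4 u23 k :: real
  assumes f_deriv: "\<And>u. (f has_real_derivative f' u) (at u)"
    and f'_deriv: "\<And>u. (f' has_real_derivative f'' u) (at u)"
    and convex: "\<And>u. u \<in> {Min {u1, u2, u3, u4} .. Max {u1, u2, u3, u4}} \<Longrightarrow> f'' u > 0"
    and order: "x1 < x2" "x2 = x3" "x3 < x4"
    and collide: "u2 > u3"
    and area: "((x2 + x3) / 2 - x1) * nl_avg f'' u1 u23 + (x4 - (x2 + x3) / 2) * nl_avg f'' u23 u4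
               = (x2 - x1) * nl_avg f'' u1 u2 + (x3 - x2) * nl_avg f'' u2 u3
                 + (x4 - x3) * nl_avg f'' u3 u4"
    and bounds: "u1 \<ge> u23" "u23 \<ge> u4"
  shows "integral {x1..x4} (\<lambda>x. \<bar>interp3 f' x1 u1 ((x2 + x3) / 2) u23 x4 u4 x - k\<bar>)
         \<le> integral {x1..x4} (\<lambda>x. \<bar>interp4 f' x1 u1 x2 u2 x3 u3 x4 u4 x - k\<bar>)"
proof -
  define lo where "lo = Min {u1, u2, u3, u4}"
  define hi where "hi = Max {u1, u2, u3, u4}"
  define I where "I = {lo..hi}"
  have posI: "\<And>u. u \<in> {lo..hi} \<Longrightarrow> f'' u > 0" using convex by (simp add: lo_def hi_def)
  have m1: "u1 \<in> I" and m2: "u2 \<in> I" and m3: "u3 \<in> I" and m4: "u4 \<in> I"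
    by (auto simp: I_def lo_def hi_def)
  have m23: "u23 \<in> I" using m1 m4 bounds by (auto simp: I_def)
  have segpos: "\<And>u. u \<in> closed_segment a b \<Longrightarrow> f'' u > 0" if "a \<in> I" "b \<in> I" for a b
  proof -
    fix u assume "u \<in> closed_segment a b"
    then have "u \<in> {lo..hi}" using that by (auto simp: cseg_real I_def)
    then show "f'' u > 0" by (rule posI)
  qed
  have segI: "closed_segment a b \<subseteq> I" if "a \<in> I" "b \<in> I" for a b
    using that by (auto simp: cseg_real I_def)
  have xm: "(x2 + x3) / 2 = x2" using order by simp
  have x24: "x2 < x4" using order by simp
  define PA1 where "PA1 = interp f' x1 u1 x2 u23"
  define PA2 where "PA2 = interp f' x2 u23 x4 u4"
  define PB1 where "PB1 = interp f' x1 u1 x2 u2"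
  define PB2 where "PB2 = interp f' x2 u3 x4 u4"
  have A: "interp3 f' x1 u1 ((x2 + x3) / 2) u23 x4 u4 = (\<lambda>x. if x \<le> x2 then PA1 x else PA2 x)"
    by (simp add: fun_eq_iff interp3_def xm PA1_def PA2_def)
  have B: "interp4 f' x1 u1 x2 u2 x3 u3 x4 u4 = (\<lambda>x. if x \<le> x2 then PB1 x else PB2 x)"
    using order by (auto simp: fun_eq_iff interp4_def PB1_def PB2_def)
  have pA1: "\<And>u. u \<in> closed_segment u1 u23 \<Longrightarrow> f'' u > 0" using segpos[OF m1 m23] by blast
  have pB1: "\<And>u. u \<in> closed_segment u1 u2 \<Longrightarrow> f'' u > 0" using segpos[OF m1 m2] by blast
  have pA2: "\<And>u. u \<in> closed_segment u23 u4 \<Longrightarrow> f'' u > 0" using segpos[OF m23 m4] by blast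
  have pB2: "\<And>u. u \<in> closed_segment u3 u4 \<Longrightarrow> f'' u > 0" using segpos[OF m3 m4] by blast
  have cA1: "\<And>x. x \<in> {x1..x2} \<Longrightarrow> PA1 x \<in> closed_segment u1 u23 \<and> f' (PA1 x) = f' u1 + (x - x1) / (x2 - x1) * (f' u23 - f' u1)"
    unfolding PA1_def by (rule seg_char[OF f'_deriv]) (use pA1 order(1) in auto)
  have iA1: "continuous_on {x1..x2} PA1" "(PA1 has_integral ((x2 - x1) * nl_avg f'' u1 u23)) {x1..x2}"
    unfolding PA1_def by (rule seg_int[OF f_deriv f'_deriv]; use pA1 order(1) in auto)+
  have cB1: "\<And>x. x \<in> {x1..x2} \<Longrightarrow> PB1 x \<in> closed_segment u1 u2 \<and> f' (PB1 x) = f' u1 + (x - x1) / (x2 - x1) * (f' u2 - f' u1)"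
    unfolding PB1_def by (rule seg_char[OF f'_deriv]) (use pB1 order(1) in auto)
  have iB1: "continuous_on {x1..x2} PB1" "(PB1 has_integral ((x2 - x1) * nl_avg f'' u1 u2)) {x1..x2}"
    unfolding PB1_def by (rule seg_int[OF f_deriv f'_deriv]; use pB1 order(1) in auto)+
  have cA2: "\<And>x. x \<in> {x2..x4} \<Longrightarrow> PA2 x \<in> closed_segment u23 u4 \<and> f' (PA2 x) = f' u23 + (x - x2) / (x4 - x2) * (f' u4 - f' u23)"
    unfolding PA2_def by (rule seg_char[OF f'_deriv]) (use pA2 x24 in auto)
  have iA2: "continuous_on {x2..x4} PA2" "(PA2 has_integral ((x4 - x2) * nl_avg f'' u23 u4)) {x2..x4}"
    unfolding PA2_def by (rule seg_int[OF f_deriv f'_deriv]; use pA2 x24 in auto)+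
  have cB2: "\<And>x. x \<in> {x2..x4} \<Longrightarrow> PB2 x \<in> closed_segment u3 u4 \<and> f' (PB2 x) = f' u3 + (x - x2) / (x4 - x2) * (f' u4 - f' u3)"
    unfolding PB2_def by (rule seg_char[OF f'_deriv]) (use pB2 x24 in auto)
  have iB2: "continuous_on {x2..x4} PB2" "(PB2 has_integral ((x4 - x2) * nl_avg f'' u3 u4)) {x2..x4}"
    unfolding PB2_def by (rule seg_int[OF f_deriv f'_deriv]; use pB2 x24 in auto)+
  have fle': "\<And>p q. p \<in> {lo..hi} \<Longrightarrow> q \<in> {lo..hi} \<Longrightarrow> f' p \<le> f' q \<longleftrightarrow> p \<le> q"
    by (rule fle[OF f'_deriv]) (use posI in auto)
  have inI: "PA1 x \<in> I" "PB1 x \<in> I" if "x \<in> {x1..x2}" for x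
    using cA1[OF that] cB1[OF that] segI[OF m1 m23] segI[OF m1 m2] by auto
  have inI2: "PA2 x \<in> I" "PB2 x \<in> I" if "x \<in> {x2..x4}" for x
    using cA2[OF that] cB2[OF that] segI[OF m23 m4] segI[OF m3 m4] by auto
  have A1ge: "u23 \<le> PA1 x" if "x \<in> {x1..x2}" for x
    using cA1[OF that] bounds by (auto simp: cseg_real)
  have A2le: "PA2 x \<le> u23" if "x \<in> {x2..x4}" for x
    using cA2[OF that] bounds by (auto simp: cseg_real)
  have t1: "0 \<le> (x - x1) / (x2 - x1)" if "x \<in> {x1..x2}" for x using that order by auto
  have t2: "0 \<le> 1 - (x - x2) / (x4 - x2)" if "x \<in> {x2..x4}" for x using that x24 by (auto simp: field_simps)
  have L1: "f' (PA1 x) - f' (PB1 x) = (x - x1) / (x2 - x1) * (f' u23 - f' u2)" if "x \<in> {x1..x2}" for x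
    using cA1[OF that] cB1[OF that] order(1) by (simp add: field_simps)
  have L2: "f' (PA2 x) - f' (PB2 x) = (1 - (x - x2) / (x4 - x2)) * (f' u23 - f' u3)" if "x \<in> {x2..x4}" for x
    using cA2[OF that] cB2[OF that] x24 by (simp add: field_simps)
  have A1leB1: "PA1 x \<le> PB1 x" if "x \<in> {x1..x2}" "u23 \<le> u2" for x
  proof -
    have "f' u23 \<le> f' u2" using fle'[unfolded I_def[symmetric], OF m23 m2] that by simp
    then have "(x - x1) / (x2 - x1) * (f' u23 - f' u2) \<le> 0"
      using t1[OF that(1)] by (intro mult_nonneg_nonpos) auto
    then have "f' (PA1 x) \<le> f' (PB1 x)" using L1[OF that(1)] by linarith
    then show ?thesis using fle'[unfolded I_def[symmetric], OF inI[OF that(1)]] by simp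
  qed
  have B1leA1: "PB1 x \<le> PA1 x" if "x \<in> {x1..x2}" "u2 \<le> u23" for x
  proof -
    have "f' u2 \<le> f' u23" using fle'[unfolded I_def[symmetric], OF m2 m23] that by simp
    then have "(x - x1) / (x2 - x1) * (f' u23 - f' u2) \<ge> 0"
      using t1[OF that(1)] by (intro mult_nonneg_nonneg) auto
    then have "f' (PB1 x) \<le> f' (PA1 x)" using L1[OF that(1)] by linarith
    then show ?thesis using fle'[unfolded I_def[symmetric], OF inI(2,1)[OF that(1)]] by simp
  qed
  have A2leB2: "PA2 x \<le> PB2 x" if "x \<in> {x2..x4}" "u23 \<le> u3" for x
  proof -
    have "f' u23 \<le> f' u3" using fle'[unfolded I_def[symmetric], OF m23 m3] that by simp
    then have "(1 - (x - x2) / (x4 - x2)) * (f' u23 - f' u3) \<le> 0"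
      using t2[OF that(1)] by (intro mult_nonneg_nonpos) auto
    then have "f' (PA2 x) \<le> f' (PB2 x)" using L2[OF that(1)] by linarith
    then show ?thesis using fle'[unfolded I_def[symmetric], OF inI2[OF that(1)]] by simp
  qed
  have B2leA2: "PB2 x \<le> PA2 x" if "x \<in> {x2..x4}" "u3 \<le> u23" for x
  proof -
    have "f' u3 \<le> f' u23" using fle'[unfolded I_def[symmetric], OF m3 m23] that by simp
    then have "(1 - (x - x2) / (x4 - x2)) * (f' u23 - f' u3) \<ge> 0"
      using t2[OF that(1)] by (intro mult_nonneg_nonneg) auto
    then have "f' (PB2 x) \<le> f' (PA2 x)" using L2[OF that(1)] by linarith
    then show ?thesis using fle'[unfolded I_def[symmetric], OF inI2(2,1)[OF that(1)]] by simp
  qed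
  define Af where "Af = (\<lambda>x. if x \<le> x2 then PA1 x else PA2 x)"
  define Bf where "Bf = (\<lambda>x. if x \<le> x2 then PB1 x else PB2 x)"
  have sgn: "\<exists>s::real. (\<forall>x\<in>{x1..x4}. \<bar>Af x - k\<bar> \<le> \<bar>Bf x - k\<bar> + s * (Af x - Bf x))"
  proof (cases "k \<le> u23")
    case True
    show ?thesis
    proof (cases "u3 \<le> u23")
      case True
      show ?thesis
      proof (intro exI ballI)
        fix x assume x: "x \<in> {x1..x4}"
        show "\<bar>Af x - k\<bar> \<le> \<bar>Bf x - k\<bar> + 1 * (Af x - Bf x)"
        proof (cases "x \<le> x2")
          case True
          then show ?thesis using A1ge[of x] x \<open>k \<le> u23\<close> by (simp add: Af_def Bf_def)
        next
          case False
          then show ?thesis using B2leA2[of x] x \<open>u3 \<le> u23\<close> by (simp add: Af_def Bf_def)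
        qed
      qed
    next
      case False
      show ?thesis
      proof (intro exI ballI)
        fix x assume x: "x \<in> {x1..x4}"
        show "\<bar>Af x - k\<bar> \<le> \<bar>Bf x - k\<bar> + (-1) * (Af x - Bf x)"
        proof (cases "x \<le> x2")
          case True
          then show ?thesis using A1leB1[of x] x False collide by (simp add: Af_def Bf_def)
        next
          case c: False
          then show ?thesis using A2leB2[of x] x False by (simp add: Af_def Bf_def)
        qed
      qed
    qed
  next
    case False
    show ?thesis
    proof (cases "u23 \<le> u2")
      case True
      show ?thesis
      proof (intro exI ballI)
        fix x assume x: "x \<in> {x1..x4}"
        show "\<bar>Af x - k\<bar> \<le> \<bar>Bf x - k\<bar> + (-1) * (Af x - Bf x)"
        proof (cases "x \<le> x2")
          case True
          then show ?thesis using A1leB1[of x] x \<open>u23 \<le> u2\<close> by (simp add: Af_def Bf_def)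
        next
          case c: False
          then show ?thesis using A2le[of x] x False by (simp add: Af_def Bf_def)
        qed
      qed
    next
      case c2: False
      show ?thesis
      proof (intro exI ballI)
        fix x assume x: "x \<in> {x1..x4}"
        show "\<bar>Af x - k\<bar> \<le> \<bar>Bf x - k\<bar> + 1 * (Af x - Bf x)"
        proof (cases "x \<le> x2")
          case True
          then show ?thesis using B1leA1[of x] x c2 by (simp add: Af_def Bf_def)
        next
          case c: False
          then show ?thesis using B2leA2[of x] x c2 collide by (simp add: Af_def Bf_def)
        qed
      qed
    qed
  qed
  then obtain s where s: "\<And>x. x \<in> {x1..x4} \<Longrightarrow> \<bar>Af x - k\<bar> \<le> \<bar>Bf x - k\<bar> + s * (Af x - Bf x)"
    by blast
  have IA: "(Af has_integral ((x2 - x1) * nl_avg f'' u1 u23 + (x4 - x2) * nl_avg f'' u23 u4)) {x1..x4}"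
    unfolding Af_def using order x24 by (intro piece_int iA1(2) iA2(2)) auto
  have IB: "(Bf has_integral ((x2 - x1) * nl_avg f'' u1 u2 + (x4 - x2) * nl_avg f'' u3 u4)) {x1..x4}"
    unfolding Bf_def using order x24 by (intro piece_int iB1(2) iB2(2)) auto
  have eqAB: "(x2 - x1) * nl_avg f'' u1 u23 + (x4 - x2) * nl_avg f'' u23 u4
      = (x2 - x1) * nl_avg f'' u1 u2 + (x4 - x2) * nl_avg f'' u3 u4"
    using area order by (simp add: xm)
  have absint: "((\<lambda>x. \<bar>(if x \<le> x2 then P1 x else P2 x) - k\<bar>) has_integral
        (integral {x1..x2} (\<lambda>x. \<bar>P1 x - k\<bar>) + integral {x2..x4} (\<lambda>x. \<bar>P2 x - k\<bar>))) {x1..x4}"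
    if "continuous_on {x1..x2} P1" "continuous_on {x2..x4} P2" for P1 P2 :: "real \<Rightarrow> real"
  proof -
    have e: "(\<lambda>x. \<bar>(if x \<le> x2 then P1 x else P2 x) - k\<bar>) = (\<lambda>x. if x \<le> x2 then \<bar>P1 x - k\<bar> else \<bar>P2 x - k\<bar>)"
      by auto
    show ?thesis unfolding e using order x24 that
      by (intro piece_int integrable_integral integrable_continuous_interval continuous_intros) auto
  qed
  obtain JA where JA: "((\<lambda>x. \<bar>Af x - k\<bar>) has_integral JA) {x1..x4}"
    using absint[OF iA1(1) iA2(1)] unfolding Af_def by blast
  obtain JB where JB: "((\<lambda>x. \<bar>Bf x - k\<bar>) has_integral JB) {x1..x4}"
    using absint[OF iB1(1) iB2(1)] unfolding Bf_def by blast
  have R: "((\<lambda>x. \<bar>Bf x - k\<bar> + s * (Af x - Bf x)) has_integral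
           (JB + s * (((x2 - x1) * nl_avg f'' u1 u23 + (x4 - x2) * nl_avg f'' u23 u4)
                   - ((x2 - x1) * nl_avg f'' u1 u2 + (x4 - x2) * nl_avg f'' u3 u4)))) {x1..x4}"
    by (intro has_integral_add JB has_integral_mult_right has_integral_diff IA IB)
  have "JA \<le> JB" using has_integral_le[OF JA R s] eqAB by simp
  then show ?thesis
    unfolding A B Af_def[symmetric] Bf_def[symmetric] using JA JB by (simp add: integral_unique)
qed

end
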